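(* In the setting described in the context, for every $(u_1,\dots,u_n)\in\widetilde C(U,W,\alpha)$ we have $u_i(p_j)=j$ for all $1\le j<i\le n$. In particular $\mathrm{fix}_{(\alpha_i,n]}(u_i,u_{i+1})\cap[a,i]\subseteq[a,0]$ for every $i\in[n-1]$, and hence $\widetilde{\mathrm{wt}}^n_\alpha(u_1,\dots,u_n)(y_1,\dots,y_{n-1};\mathbf y)$ is a product of pairwise distinct factors $(y_i-y_j)$ with $i\in[n-1]$ and $j\in[a,0]$.
   Context: Permutations: for integers $a\le n$, $S_{[a,n]}$ is the set of bijections of $\mathbb Z$ fixing every integer outside $[a,n]$, one-line notation $[w(a),\dots,w(n)]$; $\tau_{i,j}$ swaps $i<j$, $u\tau_{i,j}=u\circ\tau_{i,j}$; $\ell(u)$ = number of inversions; $u\lessdot_k u\tau_{i,j}$ if $i\le k<j$ and $\ell(u\tau_{i,j})=\ell(u)+1$; $u\xrightarrow{k}w$ if there is a chain $u=v_1\lessdot_k\cdots\lessdot_k v_s=w$ ($s\ge1$), $v_{t+1}=v_t\tau_{i_t,j_t}$, with $v_1(i_1)<\cdots<v_{s-1}(i_{s-1})$. $\mathrm{fix}_I(u,v)=\{u(t):t\in I,\ u(t)=v(t)\}$. For $\beta=(\beta_1,\dots,\beta_m)$, $C(u,w,\beta)$ is the set of $(v_1,\dots,v_{m+1})$ with $v_1=u$, $v_{m+1}=w$, $v_i\xrightarrow{\beta_i}v_{i+1}$. Setting: fix $a\le0<n$ and $A=\{(r,c):1\le r\le n,\ a\le c\le r\}$. Let $\gamma=(\gamma_N,\gamma_E,\gamma_S,\gamma_W)$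 be a boundary condition of $A$: $\gamma_N(c)$ ($c\in[a,n]$) is the label of the pipe entering through the top edge of the top cell $(\max(c,1),c)$ of column $c$ or $\varnothing$; $\gamma_E(r)$ that of the pipe entering through the right edge of $(r,r)$ or $\varnothing$; $\gamma_S(c)$ that of the pipe exiting through the bottom edge of $(n,c)$ or $\varnothing$; $\gamma_W(r)$ that of the pipe exiting through the left edge of $(r,a)$ or $\varnothing$. Assume $\gamma_S(c)\neq\varnothing$ for $c\in[a,n]$, $\gamma_W(r)=\varnothing$ and $\gamma_N(r)\ne\varnothing$ for $r\in[n]$, and the non-$\varnothing$ values of $\gamma_N,\gamma_E$ are exactly $a,\dots,n$, increasing along the order: top edges of columns $a,\dots,1$, right edge of row 1, top edge of column 2, right edge of row 2, …, top edge of column $n$, right edge of row $n$ (the values of $\gamma_S$ are then also exactly $a,\dots,n$). Put $p_c=\gamma_N(c)$ ($c\in[n]$), $\alpha_i=p_{i+1}-1$, $\alpha=(\alpha_1,\dots,\alpha_{n-1})$. $P_r=\{w\in S_{[a,n]}:w(p_j)=j\ \forall j\in(r,n]\}$; $\iota_r:P_r\to S_{[a,r]}$ deletes the values $r+1,\dots,n$ from one-line notation. $W\in P_1$: $\iota_1(W)(\ell)=\gamma_N^{-1}(\ell)$ for $\ell\in[a,p_1]$ and $\iota_1(W)$ decreasing on $(p_1,1]$. $U\in S_{[a,n]}$: $U(\ell)=\gamma_S^{-1}(\ell)$ for $\ell\in[a,n]$. $\widetilde C(U,W,\alpha)$ is the set of $(u_1,\dots,u_n)\in C(U,W,\alpha)$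 with $i\notin\mathrm{fix}_{(\alpha_i,n]}(u_i,u_{i+1})$ for all $i\in[n-1]$, and $\widetilde{\mathrm{wt}}^n_\alpha(u_1,\dots,u_n)(x_1,\dots,x_{n-1};\mathbf y)=\prod_{i\in[n-1]}\prod_{j\in\mathrm{fix}_{(\alpha_i,n]}(u_i,u_{i+1})\cap[a,i]}(x_i-y_j)$. *)

theory Defs
  imports Main
begin

definition Sperm :: "int \<Rightarrow> int \<Rightarrow> (int \<Rightarrow> int) set" where
  "Sperm a n = {w. bij w \<and> (\<forall>t. t \<notin> {a..n} \<longrightarrow> w t = t)}"

text \<open>The transposition swapping i and j; u tau_{i,j} is u o tau i j.\<close>
definition tau :: "int \<Rightarrow> int \<Rightarrow> int \<Rightarrow> int" where
  "tau i j = (\<lambda>t. if t = i then j else if t = j then i else t)"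

definition len :: "(int \<Rightarrow> int) \<Rightarrow> nat" where
  "len u = card {(s, t). s < t \<and> u t < u s}"

definition kcover :: "int \<Rightarrow> (int \<Rightarrow> int) \<Rightarrow> int \<Rightarrow> int \<Rightarrow> bool" where
  "kcover k u i j \<longleftrightarrow> i \<le> k \<and> k < j \<and> len (u \<circ> tau i j) = len u + 1"

definition kpath :: "int \<Rightarrow> (int \<Rightarrow> int) \<Rightarrow> (int \<Rightarrow> int) \<Rightarrow> bool" where
  "kpath k u w \<longleftrightarrow> (\<exists>vs ps. length vs = Suc (length ps) \<and> hd vs = u \<and> last vs = w \<and>
     (\<forall>t < length ps. kcover k (vs ! t) (fst (ps ! t)) (snd (ps ! t)) \<and>
         vs ! Suc t = (vs ! t) \<circ> tau (fst (ps ! t)) (snd (ps ! t))) \<and>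
     (\<forall>t. Suc t < length ps \<longrightarrow> (vs ! t) (fst (ps ! t)) < (vs ! Suc t) (fst (ps ! Suc t))))"

text \<open>Membership of a tuple (v_1,...,v_{m+1}) (indices 1..m+1) in C(u,w,beta), beta indexed 1..m.\<close>
definition inC :: "(int \<Rightarrow> int) \<Rightarrow> (int \<Rightarrow> int) \<Rightarrow> int \<Rightarrow> (int \<Rightarrow> int) \<Rightarrow> (int \<Rightarrow> int \<Rightarrow> int) \<Rightarrow> bool" where
  "inC u w m beta v \<longleftrightarrow> v 1 = u \<and> v (m + 1) = w \<and> (\<forall>i \<in> {1..m}. kpath (beta i) (v i) (v (i + 1)))"

definition fixI :: "int set \<Rightarrow> (int \<Rightarrow> int) \<Rightarrow> (int \<Rightarrow> int) \<Rightarrow> int set" where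
  "fixI I u v = {u t | t. t \<in> I \<and> u t = v t}"

text \<open>Membership in C-tilde(U,W,alpha); alpha indexed 1..n-1, tuple indexed 1..n.\<close>
definition inCtilde :: "int \<Rightarrow> (int \<Rightarrow> int) \<Rightarrow> (int \<Rightarrow> int) \<Rightarrow> (int \<Rightarrow> int) \<Rightarrow> (int \<Rightarrow> int \<Rightarrow> int) \<Rightarrow> bool" where
  "inCtilde n U W alpha v \<longleftrightarrow> inC U W (n - 1) alpha v \<and>
     (\<forall>i \<in> {1..n-1}. i \<notin> fixI {alpha i<..n} (v i) (v (i + 1)))"

text \<open>The weight wt-tilde^n_alpha(v)(x;y), evaluated in an arbitrary commutative ring.\<close>
definition wt :: "int \<Rightarrow> int \<Rightarrow> (int \<Rightarrow> int) \<Rightarrow> (int \<Rightarrow> int \<Rightarrow> int) \<Rightarrow> (int \<Rightarrow> 'r::comm_ring_1) \<Rightarrow> (int \<Rightarrow> 'r) \<Rightarrow> 'r" where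
  "wt a n alpha v x y = (\<Prod>i \<in> {1..n-1}. \<Prod>j \<in> fixI {alpha i<..n} (v i) (v (i + 1)) \<inter> {a..i}. (x i - y j))"

text \<open>iota_r: delete values r+1..n from the one-line notation [w(a),...,w(n)];
  the result evaluated at l in [a,r].\<close>
definition iota :: "int \<Rightarrow> int \<Rightarrow> int \<Rightarrow> (int \<Rightarrow> int) \<Rightarrow> int \<Rightarrow> int" where
  "iota a n r w l = (filter (\<lambda>x. x \<le> r) (map w [a..n])) ! nat (l - a)"

definition Pset :: "int \<Rightarrow> int \<Rightarrow> (int \<Rightarrow> int) \<Rightarrow> int \<Rightarrow> (int \<Rightarrow> int) set" where
  "Pset a n p r = {w \<in> Sperm a n. \<forall>j \<in> {r<..n}. w (p j) = j}"

text \<open>Boundary conditions: None = empty label. gN c top of column c (c in [a,n]),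
  gE r right edge of row r, gS c bottom of column c, gW r left edge of row r (r in [1,n]).
  Order of N/E edges: N(a),...,N(1),E(1),N(2),E(2),...,N(n),E(n); N(c) precedes E(r) iff c <= r.\<close>
definition std_bc :: "int \<Rightarrow> int \<Rightarrow> (int \<Rightarrow> int option) \<Rightarrow> (int \<Rightarrow> int option) \<Rightarrow>
    (int \<Rightarrow> int option) \<Rightarrow> (int \<Rightarrow> int option) \<Rightarrow> bool" where
  "std_bc a n gN gE gS gW \<longleftrightarrow>
     (\<forall>c \<in> {a..n}. gS c \<noteq> None) \<and>
     (\<forall>r \<in> {1..n}. gW r = None) \<and>
     (\<forall>r \<in> {1..n}. gN r \<noteq> None) \<and>
     (\<forall>c \<in> {a..n}. \<forall>c' \<in> {a..n}. \<forall>x y. gN c = Some x \<and> gN c' = Some y \<and> c < c' \<longrightarrow> x < y) \<and>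
     (\<forall>r \<in> {1..n}. \<forall>r' \<in> {1..n}. \<forall>x y. gE r = Some x \<and> gE r' = Some y \<and> r < r' \<longrightarrow> x < y) \<and>
     (\<forall>c \<in> {a..n}. \<forall>r \<in> {1..n}. \<forall>x y. gN c = Some x \<and> gE r = Some y \<longrightarrow>
         (c \<le> r \<longrightarrow> x < y) \<and> (r < c \<longrightarrow> y < x)) \<and>
     {x. \<exists>c \<in> {a..n}. gN c = Some x} \<union> {x. \<exists>r \<in> {1..n}. gE r = Some x} = {a..n} \<and>
     bij_betw (\<lambda>c. the (gS c)) {a..n} {a..n}"

definition pcol :: "(int \<Rightarrow> int option) \<Rightarrow> int \<Rightarrow> int" where
  "pcol gN c = the (gN c)"

definition alph :: "(int \<Rightarrow> int option) \<Rightarrow> int \<Rightarrow> int" where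
  "alph gN i = pcol gN (i + 1) - 1"

end

theory Submission
  imports Defs
begin


definition fsupp :: "(int \<Rightarrow> int) \<Rightarrow> bool" where
  "fsupp u \<longleftrightarrow> bij u \<and> (\<exists>lo hi. \<forall>t. t \<notin> {lo..hi} \<longrightarrow> u t = t)"

lemma maps_into:
  assumes "bij w" "\<forall>t. t \<notin> S \<longrightarrow> w t = t" "t \<in> S"
  shows "w t \<in> S"
proof (rule ccontr)
  assume "w t \<notin> S"
  then have "w (w t) = w t" using assms(2) by blast
  then have "w t = t" using bij_is_inj[OF assms(1)] by (meson injD)
  then show False using assms(3) \<open>w t \<notin> S\<close> by simp
qed

lemma tau_tau: "tau a b (tau a b x) = x"
  by (simp add: tau_def)

lemma bij_tau: "bij (tau a b)"
  by (metis bijI' tau_tau)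

lemma fsupp_tau:
  assumes "fsupp u" shows "fsupp (u \<circ> tau a b)"
proof -
  obtain lo hi where h: "\<forall>t. t \<notin> {lo..hi} \<longrightarrow> u t = t" using assms fsupp_def by blast
  have "\<forall>t. t \<notin> {min lo (min a b)..max hi (max a b)} \<longrightarrow> (u \<circ> tau a b) t = t"
  proof (intro allI impI)
    fix t assume "t \<notin> {min lo (min a b)..max hi (max a b)}"
    then have "t \<notin> {lo..hi}" "t \<noteq> a" "t \<noteq> b" by auto
    then show "(u \<circ> tau a b) t = t" using h by (simp add: tau_def)
  qed
  moreover have "bij (u \<circ> tau a b)" using assms bij_tau bij_comp fsupp_def by blast
  ultimately show ?thesis unfolding fsupp_def by blast
qed

lemma inv_finite:
  assumes "fsupp u" shows "finite {(s, t). s < t \<and> u t < u s}"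
proof -
  obtain lo hi where h: "\<forall>t. t \<notin> {lo..hi} \<longrightarrow> u t = t" and b: "bij u" using assms fsupp_def by blast
  have mi: "\<And>t. t \<in> {lo..hi} \<Longrightarrow> u t \<in> {lo..hi}" using maps_into[OF b h] by blast
  have "{(s, t). s < t \<and> u t < u s} \<subseteq> {lo..hi} \<times> {lo..hi}"
  proof
    fix x assume "x \<in> {(s, t). s < t \<and> u t < u s}"
    then obtain s t where x: "x = (s,t)" "s < t" "u t < u s" by blast
    have "s \<in> {lo..hi}"
    proof (rule ccontr)
      assume ns: "s \<notin> {lo..hi}"
      then have us: "u s = s" using h by blast
      show False
      proof (cases "t \<in> {lo..hi}")
        case True then show ?thesis using mi[OF True] ns us x by auto
      next
        case False then show ?thesis using h ns us x by auto
      qed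
    qed
    moreover have "t \<in> {lo..hi}"
    proof (rule ccontr)
      assume ns: "t \<notin> {lo..hi}"
      then have us: "u t = t" using h by blast
      show False
      proof (cases "s \<in> {lo..hi}")
        case True then show ?thesis using mi[OF True] ns us x by auto
      next
        case False then show ?thesis using h ns us x by auto
      qed
    qed
    ultimately show "x \<in> {lo..hi} \<times> {lo..hi}" using x by blast
  qed
  then show ?thesis by (rule finite_subset) simp
qed

lemma cover_lt:
  assumes "fsupp u" "a < b" "len (u \<circ> tau a b) = len u + 1"
  shows "u a < u b"
proof (rule ccontr)
  assume "\<not> u a < u b"
  moreover have "u a \<noteq> u b" using assms(1,2) bij_is_inj unfolding fsupp_def
    by (metis injD less_irrefl)
  ultimately have lt: "u b < u a" by simp
  define Iu where "Iu = {(s, t). s < t \<and> u t < u s}"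
  define Iw where "Iw = {(s, t). s < t \<and> (u \<circ> tau a b) t < (u \<circ> tau a b) s}"
  define f where "f = (\<lambda>(s::int, t::int). if s < a \<or> b < t then (tau a b s, tau a b t) else (s, t))"
  have ff: "f (f x) = x" for x
    using assms(2) by (cases x) (auto simp: f_def tau_def)
  have inj: "inj_on f Iw" by (metis ff inj_onI)
  have sub: "f ` Iw \<subseteq> Iu - {(a,b)}"
  proof
    fix y assume "y \<in> f ` Iw"
    then obtain x where x: "x \<in> Iw" "y = f x" by blast
    obtain s t where "x = (s,t)" by (cases x)
    then have st: "(s,t) \<in> Iw" "y = f (s,t)" using x by auto
    then have st2: "s < t" "u (tau a b t) < u (tau a b s)" unfolding Iw_def by auto
    show "y \<in> Iu - {(a,b)}"
      using st2 st(2) lt assms(2) unfolding Iu_def f_def tau_def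
      by (auto split: if_splits)
  qed
  have fin: "finite Iu" using inv_finite[OF assms(1)] Iu_def by simp
  have ab: "(a,b) \<in> Iu" using lt assms(2) Iu_def by simp
  have "card Iw \<le> card (Iu - {(a,b)})"
    using card_inj_on_le[OF inj sub] fin by simp
  also have "\<dots> = card Iu - 1" using fin ab by simp
  finally have "len (u \<circ> tau a b) \<le> len u - 1" unfolding len_def Iw_def Iu_def by simp
  then show False using assms(3) by simp
qed

definition monoR :: "int \<Rightarrow> (int \<Rightarrow> int) \<Rightarrow> (int \<Rightarrow> int) \<Rightarrow> bool" where
  "monoR k u w \<longleftrightarrow> fsupp w \<and> (\<forall>q. q \<le> k \<longrightarrow> u q \<le> w q) \<and> (\<forall>q. k < q \<longrightarrow> w q \<le> u q) \<and>
     (\<forall>t. k < t \<longrightarrow> w t \<noteq> u t \<longrightarrow> (\<exists>q. q \<le> k \<and> u t \<le> w q))"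

lemma monoR_step:
  assumes "fsupp v" "kcover k v a b" "monoR k (v \<circ> tau a b) w"
  shows "monoR k v w"
proof -
  have ak: "a \<le> k" "k < b" using assms(2) kcover_def by auto
  have lt: "v a < v b" using cover_lt[OF assms(1)] assms(2) ak unfolding kcover_def by auto
  let ?v = "v \<circ> tau a b"
  have va: "?v a = v b" "?v b = v a" by (auto simp: tau_def)
  have vo: "\<And>q. q \<noteq> a \<Longrightarrow> q \<noteq> b \<Longrightarrow> ?v q = v q" by (auto simp: tau_def)
  have m: "fsupp w" "\<And>q. q \<le> k \<Longrightarrow> ?v q \<le> w q" "\<And>q. k < q \<Longrightarrow> w q \<le> ?v q"
    "\<And>t. k < t \<Longrightarrow> w t \<noteq> ?v t \<Longrightarrow> (\<exists>q. q \<le> k \<and> ?v t \<le> w q)"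
    using assms(3) unfolding monoR_def by blast+
  have L: "v q \<le> w q" if "q \<le> k" for q
  proof (cases "q = a")
    case True then show ?thesis using m(2)[OF that] va lt by simp
  next
    case False then show ?thesis using m(2)[OF that] vo[of q] that ak by simp
  qed
  have R: "w q \<le> v q" if "k < q" for q
  proof (cases "q = b")
    case True then show ?thesis using m(3)[OF that] va lt by simp
  next
    case False then show ?thesis using m(3)[OF that] vo[of q] that ak by simp
  qed
  have X: "\<exists>q. q \<le> k \<and> v t \<le> w q" if "k < t" "w t \<noteq> v t" for t
  proof (cases "t = b")
    case True then show ?thesis using m(2)[of a] va ak by auto
  next
    case False
    then have "?v t = v t" using vo[of t] that ak by simp
    then show ?thesis using m(4)[OF that(1)] that(2) by auto
  qed
  show ?thesis unfolding monoR_def using m(1) L R X by blast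
qed

lemma monoR_refl: "fsupp u \<Longrightarrow> monoR k u u"
  unfolding monoR_def by auto

lemma chain_monoR:
  assumes "length vs = Suc (length ps)"
    "\<forall>t<length ps. kcover k (vs ! t) (fst (ps ! t)) (snd (ps ! t)) \<and>
         vs ! Suc t = (vs ! t) \<circ> tau (fst (ps ! t)) (snd (ps ! t))"
    "fsupp (hd vs)"
  shows "monoR k (hd vs) (last vs)"
  using assms
proof (induction ps arbitrary: vs)
  case Nil
  then obtain v where "vs = [v]" by (cases vs) auto
  then show ?case using Nil monoR_refl by simp
next
  case (Cons p ps)
  then obtain v vs' where vs: "vs = v # vs'" by (cases vs) auto
  have l: "length vs' = Suc (length ps)" using Cons.prems(1) vs by simp
  then have ne: "vs' \<noteq> []" by auto
  have c0: "kcover k v (fst p) (snd p)" "vs' ! 0 = v \<circ> tau (fst p) (snd p)"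
    using Cons.prems(2) vs by (auto dest: spec[of _ 0])
  have hd': "hd vs' = v \<circ> tau (fst p) (snd p)" using c0(2) ne by (simp add: hd_conv_nth)
  have fv: "fsupp v" using Cons.prems(3) vs by simp
  have st: "\<forall>t<length ps. kcover k (vs' ! t) (fst (ps ! t)) (snd (ps ! t)) \<and>
         vs' ! Suc t = (vs' ! t) \<circ> tau (fst (ps ! t)) (snd (ps ! t))"
  proof (intro allI impI)
    fix t assume "t < length ps"
    then have "Suc t < length (p # ps)" by simp
    then show "kcover k (vs' ! t) (fst (ps ! t)) (snd (ps ! t)) \<and>
         vs' ! Suc t = (vs' ! t) \<circ> tau (fst (ps ! t)) (snd (ps ! t))"
      using Cons.prems(2) vs by fastforce
  qed
  have "monoR k (hd vs') (last vs')"
    using Cons.IH[OF l st] hd' fsupp_tau[OF fv] by metis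
  then have "monoR k v (last vs')" using monoR_step[OF fv c0(1)] hd' by simp
  then show ?case using vs ne by simp
qed

lemma kpath_monoR: "kpath k u w \<Longrightarrow> fsupp u \<Longrightarrow> monoR k u w"
  unfolding kpath_def using chain_monoR by blast



theorem lemma4p16:
  fixes a n :: int and gN gE gS gW :: "int \<Rightarrow> int option"
    and U W :: "int \<Rightarrow> int" and us :: "int \<Rightarrow> int \<Rightarrow> int"
  assumes "a \<le> 0" and "0 < n"
    and "std_bc a n gN gE gS gW"
    and "U \<in> Sperm a n"
    and "\<forall>l \<in> {a..n}. U l \<in> {a..n} \<and> gS (U l) = Some l"
    and "W \<in> Pset a n (pcol gN) 1"
    and "\<forall>l \<in> {a..pcol gN 1}. iota a n 1 W l \<in> {a..n} \<and> gN (iota a n 1 W l) = Some l"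
    and "\<forall>l l'. pcol gN 1 < l \<and> l < l' \<and> l' \<le> 1 \<longrightarrow> iota a n 1 W l' < iota a n 1 W l"
    and "inCtilde n U W (alph gN) us"
  shows "(\<forall>i j. 1 \<le> j \<and> j < i \<and> i \<le> n \<longrightarrow> us i (pcol gN j) = j)
    \<and> (\<forall>i \<in> {1..n-1}. fixI {alph gN i<..n} (us i) (us (i + 1)) \<inter> {a..i} \<subseteq> {a..0})
    \<and> (\<exists>S \<subseteq> {1..n-1} \<times> {a..0}. \<forall>y :: int \<Rightarrow> 'r::comm_ring_1.
          wt a n (alph gN) us y y = (\<Prod>(i, j) \<in> S. (y i - y j)))"
proof -
  define p where "p = pcol gN"
  define al where "al = alph gN"
  have al_p: "al i = p (i + 1) - 1" for i unfolding al_def p_def alph_def by simp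
  have bc_N: "\<forall>r \<in> {1..n}. gN r \<noteq> None"
    and bc_mono: "\<forall>c \<in> {a..n}. \<forall>c' \<in> {a..n}. \<forall>x y. gN c = Some x \<and> gN c' = Some y \<and> c < c' \<longrightarrow> x < y"
    and bc_set: "{x. \<exists>c \<in> {a..n}. gN c = Some x} \<union> {x. \<exists>r \<in> {1..n}. gE r = Some x} = {a..n}"
    using assms(3) unfolding std_bc_def by blast+
  have pS: "gN j = Some (p j)" "p j \<in> {a..n}" if "j \<in> {1..n}" for j
  proof -
    show g: "gN j = Some (p j)" using bc_N that unfolding p_def pcol_def by auto
    have "j \<in> {a..n}" using that assms(1) by auto
    then have "p j \<in> {x. \<exists>c \<in> {a..n}. gN c = Some x}" using g by blast
    then show "p j \<in> {a..n}" using bc_set by blast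
  qed
  have p_mono: "p j < p j'" if "1 \<le> j" "j < j'" "j' \<le> n" for j j'
  proof -
    have "j \<in> {a..n}" "j' \<in> {a..n}" using that assms(1) by auto
    moreover have "gN j = Some (p j)" "gN j' = Some (p j')" using pS that by auto
    ultimately show ?thesis using bc_mono[rule_format, of j j' "p j" "p j'"] that by blast
  qed
  have p_mono': "j < j'" if "1 \<le> j" "j \<le> n" "1 \<le> j'" "j' \<le> n" "p j < p j'" for j j'
  proof (rule ccontr)
    assume "\<not> j < j'"
    then have "j' < j \<or> j' = j" by linarith
    then show False
    proof
      assume "j' < j" then show False using p_mono[of j' j] that by linarith
    next
      assume "j' = j" then show False using that by simp
    qed
  qed
  have gN_inj: "c = c'" if "c \<in> {a..n}" "c' \<in> {a..n}" "gN c = Some x" "gN c' = Some x" for c c' x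
  proof (rule ccontr)
    assume "c \<noteq> c'"
    then have "c < c' \<or> c' < c" by linarith
    then show False
    proof
      assume "c < c'" then show False using bc_mono[rule_format, of c c' x x] that by blast
    next
      assume "c' < c" then show False using bc_mono[rule_format, of c' c x x] that by blast
    qed
  qed
  have Wperm: "W \<in> Sperm a n" and Wp2: "\<forall>j \<in> {1<..n}. W (p j) = j"
    using assms(6) unfolding Pset_def p_def by auto
  have Wb: "bij W" and Wfix: "\<forall>t. t \<notin> {a..n} \<longrightarrow> W t = t" using Wperm Sperm_def by auto
  have Wr: "W t \<in> {a..n}" if "t \<in> {a..n}" for t using maps_into[OF Wb Wfix that] .
  have Winj: "inj W" using Wb bij_is_inj by blast
  have W1: "W (p 1) = 1"
  proof -
    have n1: "1 \<in> {1..n}" using assms(2) by simp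
    have p1: "a \<le> p 1" "p 1 \<le> n" using pS[OF n1] by auto
    have le1: "W q \<le> 1" if "q \<in> {a..p 1}" for q
    proof (rule ccontr)
      assume "\<not> W q \<le> 1"
      moreover have "W q \<in> {a..n}" using Wr that p1 by auto
      ultimately have j: "W q \<in> {1<..n}" by auto
      then have "W (p (W q)) = W q" using Wp2 by blast
      then have "p (W q) = q" using Winj by (meson injD)
      moreover have "p 1 < p (W q)" using p_mono[of 1 "W q"] j by auto
      ultimately show False using that by auto
    qed
    have "[a..n] = [a..p 1] @ [p 1 + 1..n]" using upto_split2 p1 by blast
    then have "filter (\<lambda>x. x \<le> 1) (map W [a..n]) = map W [a..p 1] @ filter (\<lambda>x. x \<le> 1) (map W [p 1 + 1..n])"
      using le1 by (simp add: filter_True)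
    then have "iota a n 1 W (p 1) = (map W [a..p 1]) ! nat (p 1 - a)"
      unfolding iota_def using p1 by (simp add: nth_append)
    also have "\<dots> = W (p 1)" using p1 by simp
    finally have io: "iota a n 1 W (pcol gN 1) = W (p 1)" using p_def by simp
    have "pcol gN 1 \<in> {a..pcol gN 1}" using p1 p_def by simp
    then have X: "iota a n 1 W (pcol gN 1) \<in> {a..n} \<and> gN (iota a n 1 W (pcol gN 1)) = Some (pcol gN 1)"
      using assms(7) by blast
    have "W (p 1) \<in> {a..n}" "gN (W (p 1)) = Some (p 1)" using X io unfolding p_def by auto
    then show ?thesis using gN_inj[of "W (p 1)" 1] pS[OF n1] assms(1) n1 by auto
  qed
  have Wp: "W (p j) = j" if "j \<in> {1..n}" for j
    using Wp2 W1 that by (cases "j = 1") auto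
  have Wkey: "q = p i \<and> W q = i" if "1 \<le> i" "i \<le> n - 1" "q \<le> al i" "i \<le> W q" for q i
  proof -
    have qn: "q \<le> n" using that al_p pS[of "i+1"] by auto
    have qa: "q \<in> {a..n}"
    proof (rule ccontr)
      assume "q \<notin> {a..n}" then have "W q = q" "q < a" using Wfix qn by auto
      then show False using that assms(1) by auto
    qed
    have wq: "W q \<in> {1..n}" using Wr[OF qa] that by auto
    then have "W (p (W q)) = W q" using Wp by blast
    then have pq: "p (W q) = q" using Winj by (meson injD)
    then have "p (W q) < p (i + 1)" using that al_p by auto
    then have "W q < i + 1" using p_mono'[of "W q" "i+1"] wq that by auto
    then show ?thesis using pq that by auto
  qed
  have us1: "us 1 = U" and usn: "us n = W"
    and kp: "\<forall>i\<in>{1..n-1}. kpath (al i) (us i) (us (i+1))"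
    and fixc: "\<forall>i\<in>{1..n-1}. i \<notin> fixI {al i<..n} (us i) (us (i+1))"
    using assms(9) unfolding inCtilde_def inC_def al_def by auto
  have Ub: "bij U" and Ufix: "\<forall>t. t \<notin> {a..n} \<longrightarrow> U t = t" using assms(4) Sperm_def by auto
  have fsU: "fsupp U" unfolding fsupp_def using Ub Ufix by blast
  have fsn: "\<forall>d::nat. 1 + int d \<le> n \<longrightarrow> fsupp (us (1 + int d))"
  proof
    fix d :: nat show "1 + int d \<le> n \<longrightarrow> fsupp (us (1 + int d))"
    proof (induction d)
      case 0 then show ?case using fsU us1 by simp
    next
      case (Suc d)
      show ?case
      proof
        assume h: "1 + int (Suc d) \<le> n"
        then have "1 + int d \<in> {1..n-1}" by simp
        then have "kpath (al (1 + int d)) (us (1 + int d)) (us (1 + int d + 1))" using kp by blast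
        moreover have "fsupp (us (1 + int d))" using Suc h by simp
        ultimately have "monoR (al (1 + int d)) (us (1 + int d)) (us (1 + int d + 1))"
          using kpath_monoR by blast
        then show "fsupp (us (1 + int (Suc d)))" unfolding monoR_def by (simp add: add.commute add.left_commute)
      qed
    qed
  qed
  have fs: "fsupp (us i)" if "i \<in> {1..n}" for i
    using fsn[rule_format, of "nat (i - 1)"] that by simp
  have mR: "monoR (al i) (us i) (us (i+1))" if "i \<in> {1..n-1}" for i
    using kp that fs[of i] kpath_monoR by auto
  have al_mono: "al l \<le> al l'" if "1 \<le> l" "l \<le> l'" "l' \<le> n - 1" for l l'
  proof (cases "l = l'")
    case True then show ?thesis by simp
  next
    case False then show ?thesis using p_mono[of "l+1" "l'+1"] that al_p by simp
  qed
  have al_n: "al l < n" if "l \<in> {1..n-1}" for l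
    using pS[of "l+1"] that al_p by auto
  have al_t: "al l < t" if "l \<in> {1..n-1}" "n < t" for l t using al_n[OF that(1)] that(2) by simp
  have mono: "\<forall>d::nat. \<forall>i. 1 \<le> i \<longrightarrow> i + int d \<le> n \<longrightarrow>
      ((\<forall>l\<in>{i..i + int d - 1}. q \<le> al l) \<longrightarrow> us i q \<le> us (i + int d) q) \<and>
      ((\<forall>l\<in>{i..i + int d - 1}. al l < q) \<longrightarrow> us (i + int d) q \<le> us i q)" for q
  proof
    fix d :: nat show "\<forall>i. 1 \<le> i \<longrightarrow> i + int d \<le> n \<longrightarrow>
      ((\<forall>l\<in>{i..i + int d - 1}. q \<le> al l) \<longrightarrow> us i q \<le> us (i + int d) q) \<and>
      ((\<forall>l\<in>{i..i + int d - 1}. al l < q) \<longrightarrow> us (i + int d) q \<le> us i q)"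
    proof (induction d)
      case 0 then show ?case by simp
    next
      case (Suc d)
      show ?case
      proof (intro allI impI)
        fix i assume i1: "1 \<le> i" and h: "i + int (Suc d) \<le> n"
        have e: "i + int (Suc d) = i + int d + 1" by simp
        have l0: "i + int d \<in> {1..n-1}" using i1 h by simp
        have IH: "((\<forall>l\<in>{i..i + int d - 1}. q \<le> al l) \<longrightarrow> us i q \<le> us (i + int d) q) \<and>
          ((\<forall>l\<in>{i..i + int d - 1}. al l < q) \<longrightarrow> us (i + int d) q \<le> us i q)"
          using Suc.IH i1 h by simp
        have M: "monoR (al (i + int d)) (us (i + int d)) (us (i + int d + 1))" using mR[OF l0] .
        have sub: "{i..i + int d - 1} \<subseteq> {i..i + int (Suc d) - 1}" "i + int d \<in> {i..i + int (Suc d) - 1}"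
          by auto
        show "((\<forall>l\<in>{i..i + int (Suc d) - 1}. q \<le> al l) \<longrightarrow> us i q \<le> us (i + int (Suc d)) q) \<and>
          ((\<forall>l\<in>{i..i + int (Suc d) - 1}. al l < q) \<longrightarrow> us (i + int (Suc d)) q \<le> us i q)"
        proof (intro conjI impI)
          assume A: "\<forall>l\<in>{i..i + int (Suc d) - 1}. q \<le> al l"
          then have "us i q \<le> us (i + int d) q" using IH sub by blast
          moreover have "us (i + int d) q \<le> us (i + int d + 1) q"
            using M A sub(2) unfolding monoR_def by blast
          ultimately show "us i q \<le> us (i + int (Suc d)) q" unfolding e by (rule order_trans)
        next
          assume A: "\<forall>l\<in>{i..i + int (Suc d) - 1}. al l < q"
          then have "us (i + int d) q \<le> us i q" using IH sub by blast
          moreover have "us (i + int d + 1) q \<le> us (i + int d) q"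
            using M A sub(2) unfolding monoR_def by blast
          ultimately show "us (i + int (Suc d)) q \<le> us i q" unfolding e by (metis order_trans)
        qed
      qed
    qed
  qed
  have right: "us i t = t" if "i \<in> {1..n}" "n < t" for i t
  proof -
    have "\<forall>l\<in>{1..1 + int (nat (i - 1)) - 1}. al l < t" using that by (auto intro!: al_t)
    then have "us (1 + int (nat (i - 1))) t \<le> us 1 t"
      using mono[of t, rule_format, of 1 "nat (i - 1)"] that by auto
    then have A: "us i t \<le> t" using that us1 Ufix by simp
    have "\<forall>l\<in>{i..i + int (nat (n - i)) - 1}. al l < t" using that by (auto intro!: al_t)
    then have "us (i + int (nat (n - i))) t \<le> us i t"
      using mono[of t, rule_format, of i "nat (n - i)"] that by auto
    then have "us n t \<le> us i t" using that by simp
    then have B: "t \<le> us i t" using that usn Wfix by simp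
    show ?thesis using A B by simp
  qed
  have upper: "us (i + 1) q \<le> W q" if "i \<in> {1..n-1}" "q \<le> al i" for i q
  proof -
    have "\<forall>l\<in>{i + 1..i + 1 + int (nat (n - i - 1)) - 1}. q \<le> al l"
    proof
      fix l assume l: "l \<in> {i + 1..i + 1 + int (nat (n - i - 1)) - 1}"
      then have "al i \<le> al l" using al_mono[of i l] that by simp
      then show "q \<le> al l" using that by simp
    qed
    then have "us (i + 1) q \<le> us (i + 1 + int (nat (n - i - 1))) q"
      using mono[of q, rule_format, of "i + 1" "nat (n - i - 1)"] that by auto
    then show ?thesis using that usn by simp
  qed
  have main: "\<forall>d::nat. 1 + int d \<le> n \<longrightarrow> (\<forall>j. 1 \<le> j \<and> j < 1 + int d \<longrightarrow> us (1 + int d) (p j) = j)"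
  proof
    fix d :: nat show "1 + int d \<le> n \<longrightarrow> (\<forall>j. 1 \<le> j \<and> j < 1 + int d \<longrightarrow> us (1 + int d) (p j) = j)"
    proof (induction d)
      case 0 then show ?case by simp
    next
      case (Suc d)
      define i where "i = 1 + int d"
      have e: "1 + int (Suc d) = i + 1" using i_def by simp
      show ?case unfolding e
      proof (intro impI allI)
        fix j assume h: "i + 1 \<le> n" and j: "1 \<le> j \<and> j < i + 1"
        have IH: "\<forall>j. 1 \<le> j \<and> j < i \<longrightarrow> us i (p j) = j" using Suc.IH h i_def by simp
        have iI: "i \<in> {1..n-1}" using h i_def by simp
        have M: "monoR (al i) (us i) (us (i + 1))" using mR[OF iI] .
        then have L: "\<And>q. q \<le> al i \<Longrightarrow> us i q \<le> us (i+1) q"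
          and X: "\<And>t. al i < t \<Longrightarrow> us (i+1) t \<noteq> us i t \<Longrightarrow> (\<exists>q. q \<le> al i \<and> us i t \<le> us (i+1) q)"
          unfolding monoR_def by blast+
        have pj: "p j' \<le> al i" if "1 \<le> j'" "j' \<le> i" for j'
          using p_mono[of j' "i+1"] that h al_p by simp
        show "us (i + 1) (p j) = j"
        proof (cases "j < i")
          case True
          have "j \<le> us (i+1) (p j)" using L[OF pj[of j]] IH True j by fastforce
          moreover have "us (i+1) (p j) \<le> j" using upper[OF iI pj[of j]] Wp[of j] True j h by simp
          ultimately show ?thesis by simp
        next
          case False
          then have ji: "j = i" using j by simp
          have "surj (us i)" using fs[of i] iI unfolding fsupp_def by (simp add: bij_is_surj)
          then obtain t where t: "us i t = i" by (metis surjD)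
          have "\<exists>q. q \<le> al i \<and> i \<le> us (i+1) q"
          proof (cases "t \<le> al i")
            case True then show ?thesis using L[OF True] t by auto
          next
            case False
            have tn: "t \<le> n"
            proof (rule ccontr)
              assume "\<not> t \<le> n" then have "us i t = t" using right[of i t] iI by simp
              then show False using t \<open>\<not> t \<le> n\<close> iI by simp
            qed
            have "us (i+1) t \<noteq> us i t"
            proof
              assume "us (i+1) t = us i t"
              then have "i \<in> fixI {al i<..n} (us i) (us (i+1))"
                unfolding fixI_def using t tn False by (intro CollectI exI[of _ t]) auto
              then show False using fixc iI by blast
            qed
            then show ?thesis using X[of t] False t by auto
          qed
          then obtain q where q: "q \<le> al i" "i \<le> us (i+1) q" by blast
          have "i \<le> W q" using q upper[OF iI q(1)] by simp
          then have "q = p i" "W q = i" using Wkey[of i q] iI q by auto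
          then show ?thesis using q upper[OF iI q(1)] ji by simp
        qed
      qed
    qed
  qed
  have C1: "\<forall>i j. 1 \<le> j \<and> j < i \<and> i \<le> n \<longrightarrow> us i (p j) = j"
  proof (intro allI impI)
    fix i j assume h: "1 \<le> j \<and> j < i \<and> i \<le> n"
    then show "us i (p j) = j" using main[rule_format, of "nat (i - 1)" j] by simp
  qed
  have C2: "\<forall>i \<in> {1..n-1}. fixI {al i<..n} (us i) (us (i + 1)) \<inter> {a..i} \<subseteq> {a..0}"
  proof (intro ballI subsetI)
    fix i x assume iI: "i \<in> {1..n-1}" and x: "x \<in> fixI {al i<..n} (us i) (us (i + 1)) \<inter> {a..i}"
    then obtain t where t: "t \<in> {al i<..n}" "x = us i t" "us i t = us (i+1) t" "a \<le> x" "x \<le> i"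
      unfolding fixI_def by auto
    have "x \<le> 0"
    proof (rule ccontr)
      assume "\<not> x \<le> 0"
      show False
      proof (cases "x = i")
        case True
        then have "i \<in> fixI {al i<..n} (us i) (us (i+1))" unfolding fixI_def using t by blast
        then show False using fixc iI by blast
      next
        case False
        then have "us i (p x) = x" using C1 \<open>\<not> x \<le> 0\<close> t iI by auto
        moreover have "inj (us i)" using fs[of i] iI unfolding fsupp_def by (simp add: bij_is_inj)
        ultimately have "p x = t" using t by (metis injD)
        moreover have "p x < p (i + 1)" using p_mono[of x "i+1"] False t iI \<open>\<not> x \<le> 0\<close> by simp
        ultimately show False using t al_p by simp
      qed
    qed
    then show "x \<in> {a..0}" using t by simp
  qed
  define F where "F i = fixI {al i<..n} (us i) (us (i + 1)) \<inter> {a..i}" for i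
  define S where "S = Sigma {1..n-1} F"
  have C3: "S \<subseteq> {1..n-1} \<times> {a..0}" using C2 unfolding S_def F_def by blast
  have C4: "wt a n (alph gN) us y y = (\<Prod>(i, j) \<in> S. (y i - y j))" for y :: "int \<Rightarrow> 'r::comm_ring_1"
  proof -
    have "wt a n (alph gN) us y y = (\<Prod>i \<in> {1..n-1}. \<Prod>j \<in> F i. (y i - y j))"
      unfolding wt_def F_def al_def by simp
    also have "\<dots> = (\<Prod>(i, j) \<in> S. (y i - y j))"
      unfolding S_def by (rule prod.Sigma) (auto simp: F_def)
    finally show ?thesis .
  qed
  show ?thesis using C1 C2 C3 C4 unfolding p_def al_def by blast
qed

end
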